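(* Let $G$ be a graph on $V$ and $W\subseteq V$ reducible in $G$. Then there is an applicable combinatorial reduction strategy $(\gamma_1,\dots,\gamma_k)$ on $G$ with domain $W$ such that $\gamma_k\circ\cdots\circ\gamma_1(G)=\Gamma_W(G)$.
   Context: A graph means a finite simple graph in which loops are allowed, with adjacency matrix $A$ over $\mathbf F_2$ ($A_{vv}=1$ iff $v$ has a loop). Let $\mathcal V$ be the $\mathbf F_2$-vector space with basis $V$, $\mathcal E(x,y)=x^TAy$, $\langle W\rangle$ the span of $W$, $\langle W\rangle^{\perp\mathcal E}=\{x:\mathcal E(x,w)=0\ \forall w\in\langle W\rangle\}$. $W$ is reducible if $\langle W\rangle+\langle W\rangle^{\perp\mathcal E}=\mathcal V$; then $\mathcal E^W(x_1,x_2)=\mathcal E(x_1',x_2')$ with $x_i'\in\langle W\rangle^{\perp\mathcal E}$, $x_i-x_i'\in\langle W\rangle$, and $\Gamma_W(G)$ is the graph on $V\setminus W$ in which $v,w$ (possibly equal) are joined iff $\mathcal E^W(v,w)=1$. Combinatorial reduction rules (domain ordered first, $R$ the principal submatrix on the remaining vertices): $\mathrm{gpr}_v$ applies iff $v$ has a loop, $\begin{pmatrix}1&Q\\Q^T&R\end{pmatrix}\mapsto R-Q^TQ$; $\mathrm{gdr}_{v_1,v_2}$ applies iff $v_1,v_2$ are loopless and adjacent, $\begin{pmatrix}J&Q\\Q^T&R\end{pmatrix}\mapsto R-Q^TJQ$, $J=\begin{pmatrix}0&1\\1&0\end{pmatrix}$; $\mathrm{gnr}_v$ applies iff $v$ is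 loopless with no neighbors, $\begin{pmatrix}0&\mathbf 0\\ \mathbf 0^T&R\end{pmatrix}\mapsto R$. A combinatorial reduction strategy is a sequence $(\gamma_1,\dots,\gamma_k)$ of such rules; it is applicable to $G$ if each $\gamma_i$ applies to $\gamma_{i-1}\circ\cdots\circ\gamma_1(G)$; its domain is the set of all vertices removed. *)

theory Defs
  imports Main
begin

text \<open>A graph (loops allowed) is a pair (V, A): a finite vertex set V and an adjacency
  relation A (the adjacency matrix over F2, A v v = loop at v), symmetric and vanishing
  outside V. Vectors of the F2-space with basis V are represented by subsets of V
  (their supports); vector addition is symmetric difference.\<close>

type_synonym 'a graph = "'a set \<times> ('a \<Rightarrow> 'a \<Rightarrow> bool)"

definition is_graph :: "'a graph \<Rightarrow> bool" where
  "is_graph G \<longleftrightarrow> finite (fst G) \<and> (\<forall>u w. snd G u w = snd G w u)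
     \<and> (\<forall>u w. snd G u w \<longrightarrow> u \<in> fst G \<and> w \<in> fst G)"

definition symdiff :: "'a set \<Rightarrow> 'a set \<Rightarrow> 'a set" where
  "symdiff x y = (x - y) \<union> (y - x)"

text \<open>Bilinear form E(x,y) = x^T A y over F2 (True means 1).\<close>
definition bform :: "('a \<Rightarrow> 'a \<Rightarrow> bool) \<Rightarrow> 'a set \<Rightarrow> 'a set \<Rightarrow> bool" where
  "bform A x y = odd (card {(u, v). u \<in> x \<and> v \<in> y \<and> A u v})"

definition span_W :: "'a set \<Rightarrow> 'a set set" where
  "span_W W = {y. y \<subseteq> W}"

definition perpE :: "'a graph \<Rightarrow> 'a set \<Rightarrow> 'a set set" where
  "perpE G W = {x. x \<subseteq> fst G \<and> (\<forall>w \<in> span_W W. \<not> bform (snd G) x w)}"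

definition reducible :: "'a graph \<Rightarrow> 'a set \<Rightarrow> bool" where
  "reducible G W \<longleftrightarrow> (\<forall>x. x \<subseteq> fst G \<longrightarrow>
      (\<exists>y z. y \<in> span_W W \<and> z \<in> perpE G W \<and> x = symdiff y z))"

definition perp_part :: "'a graph \<Rightarrow> 'a set \<Rightarrow> 'a set \<Rightarrow> 'a set" where
  "perp_part G W x = (SOME x'. x' \<in> perpE G W \<and> symdiff x x' \<in> span_W W)"

definition bformW :: "'a graph \<Rightarrow> 'a set \<Rightarrow> 'a set \<Rightarrow> 'a set \<Rightarrow> bool" where
  "bformW G W x1 x2 = bform (snd G) (perp_part G W x1) (perp_part G W x2)"

definition Gamma :: "'a set \<Rightarrow> 'a graph \<Rightarrow> 'a graph" where
  "Gamma W G = (fst G - W,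
     \<lambda>u w. u \<in> fst G - W \<and> w \<in> fst G - W \<and> bformW G W {u} {w})"

datatype 'a rule = Gpr 'a | Gdr 'a 'a | Gnr 'a

fun rule_dom :: "'a rule \<Rightarrow> 'a set" where
  "rule_dom (Gpr v) = {v}"
| "rule_dom (Gdr v1 v2) = {v1, v2}"
| "rule_dom (Gnr v) = {v}"

fun applies :: "'a rule \<Rightarrow> 'a graph \<Rightarrow> bool" where
  "applies (Gpr v) G = (v \<in> fst G \<and> snd G v v)"
| "applies (Gdr v1 v2) G = (v1 \<in> fst G \<and> v2 \<in> fst G \<and> \<not> snd G v1 v1 \<and> \<not> snd G v2 v2
      \<and> snd G v1 v2)"
| "applies (Gnr v) G = (v \<in> fst G \<and> \<not> snd G v v \<and> (\<forall>u \<in> fst G. \<not> snd G v u))"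

text \<open>Over F2: gpr gives R - Q^T Q, gdr gives R - Q^T J Q, gnr gives R.\<close>
fun apply_rule :: "'a rule \<Rightarrow> 'a graph \<Rightarrow> 'a graph" where
  "apply_rule (Gpr v) G = (fst G - {v},
     \<lambda>u w. u \<in> fst G - {v} \<and> w \<in> fst G - {v} \<and>
       (snd G u w \<noteq> (snd G v u \<and> snd G v w)))"
| "apply_rule (Gdr v1 v2) G = (fst G - {v1, v2},
     \<lambda>u w. u \<in> fst G - {v1, v2} \<and> w \<in> fst G - {v1, v2} \<and>
       (snd G u w \<noteq> ((snd G v1 u \<and> snd G v2 w) \<noteq> (snd G v2 u \<and> snd G v1 w))))"
| "apply_rule (Gnr v) G = (fst G - {v},
     \<lambda>u w. u \<in> fst G - {v} \<and> w \<in> fst G - {v} \<and> snd G u w)"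

fun applicable :: "'a rule list \<Rightarrow> 'a graph \<Rightarrow> bool" where
  "applicable [] G = True"
| "applicable (r # rs) G = (applies r G \<and> applicable rs (apply_rule r G))"

fun run_strategy :: "'a rule list \<Rightarrow> 'a graph \<Rightarrow> 'a graph" where
  "run_strategy [] G = G"
| "run_strategy (r # rs) G = run_strategy rs (apply_rule r G)"

definition strategy_dom :: "'a rule list \<Rightarrow> 'a set" where
  "strategy_dom rs = (\<Union>r \<in> set rs. rule_dom r)"

end

theory Submission
  imports Defs
begin

lemma odd_card_symdiff:
  assumes "finite S" "finite T"
  shows "odd (card (symdiff S T)) = (odd (card S) \<noteq> odd (card T))"
proof -
  have e: "symdiff S T = (S \<union> T) - (S \<inter> T)" unfolding symdiff_def by auto
  have c1: "card (S \<union> T) + card (S \<inter> T) = card S + card T"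
    using card_Un_Int[OF assms] by simp
  have c2: "card ((S \<union> T) - (S \<inter> T)) = card (S \<union> T) - card (S \<inter> T)"
    by (rule card_Diff_subset) (use assms in auto)
  have c3: "card (S \<inter> T) \<le> card (S \<union> T)" by (rule card_mono) (use assms in auto)
  show ?thesis unfolding e c2 using c1 c3 by presburger
qed

lemma pset_finite: "finite x \<Longrightarrow> finite y \<Longrightarrow> finite {(u, v). u \<in> x \<and> v \<in> y \<and> A u v}"
  by (rule finite_subset[of _ "x \<times> y"]) auto

lemma bform_symdiff_left:
  assumes "finite x" "finite x'" "finite y"
  shows "bform A (symdiff x x') y = (bform A x y \<noteq> bform A x' y)"
proof -
  have "{(u, v). u \<in> symdiff x x' \<and> v \<in> y \<and> A u v} =
     symdiff {(u, v). u \<in> x \<and> v \<in> y \<and> A u v} {(u, v). u \<in> x' \<and> v \<in> y \<and> A u v}"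
    unfolding symdiff_def by auto
  then show ?thesis unfolding bform_def
    by (simp add: odd_card_symdiff pset_finite assms)
qed

lemma bform_symdiff_right:
  assumes "finite x" "finite y" "finite y'"
  shows "bform A x (symdiff y y') = (bform A x y \<noteq> bform A x y')"
proof -
  have "{(u, v). u \<in> x \<and> v \<in> symdiff y y' \<and> A u v} =
     symdiff {(u, v). u \<in> x \<and> v \<in> y \<and> A u v} {(u, v). u \<in> x \<and> v \<in> y' \<and> A u v}"
    unfolding symdiff_def by auto
  then show ?thesis unfolding bform_def
    by (simp add: odd_card_symdiff pset_finite assms)
qed

lemma bform_sym:
  assumes "\<And>u w. A u w = A w u"
  shows "bform A x y = bform A y x"
proof -
  have "{(u, v). u \<in> y \<and> v \<in> x \<and> A u v} = prod.swap ` {(u, v). u \<in> x \<and> v \<in> y \<and> A u v}"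
    using assms by auto
  then have "card {(u, v). u \<in> y \<and> v \<in> x \<and> A u v} = card {(u, v). u \<in> x \<and> v \<in> y \<and> A u v}"
    by (simp add: card_image)
  then show ?thesis unfolding bform_def by simp
qed

lemma bform_single: "bform A {u} {w} = A u w"
proof -
  have "{(a, b). a \<in> {u} \<and> b \<in> {w} \<and> A a b} = (if A u w then {(u,w)} else {})" by auto
  then show ?thesis unfolding bform_def by simp
qed

lemma bform_empty_right: "bform A x {} = False"
  unfolding bform_def by simp

lemma bform_single_right: "bform A x {v} = odd (card {u \<in> x. A u v})"
proof -
  have "{(a, b). a \<in> x \<and> b \<in> {v} \<and> A a b} = (\<lambda>u. (u, v)) ` {u \<in> x. A u v}" by auto
  moreover have "inj_on (\<lambda>u. (u, v)) {u \<in> x. A u v}" by (auto simp: inj_on_def)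
  ultimately show ?thesis unfolding bform_def by (simp add: card_image)
qed

lemma bform_single_left: "bform A {v} y = odd (card {w \<in> y. A v w})"
proof -
  have "{(a, b). a \<in> {v} \<and> b \<in> y \<and> A a b} = (\<lambda>w. (v, w)) ` {w \<in> y. A v w}" by auto
  moreover have "inj_on (\<lambda>w. (v, w)) {w \<in> y. A v w}" by (auto simp: inj_on_def)
  ultimately show ?thesis unfolding bform_def by (simp add: card_image)
qed

lemma bform_remove:
  assumes "finite x" "finite z"
  shows "bform A x z = (bform A (x - {v}) z \<noteq> (v \<in> x \<and> bform A {v} z))"
proof (cases "v \<in> x")
  case True
  then have "x = symdiff (x - {v}) {v}" unfolding symdiff_def by auto
  then have "bform A x z = bform A (symdiff (x - {v}) {v}) z" by simp
  also have "\<dots> = (bform A (x - {v}) z \<noteq> bform A {v} z)"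
    by (rule bform_symdiff_left) (use assms in auto)
  finally show ?thesis using True by simp
next
  case False then show ?thesis by simp
qed

lemma bform_add:
  assumes "finite x" "finite y"
  shows "bform (\<lambda>u w. A u w \<noteq> B u w) x y = (bform A x y \<noteq> bform B x y)"
proof -
  have "{(u, v). u \<in> x \<and> v \<in> y \<and> (A u v \<noteq> B u v)} =
     symdiff {(u, v). u \<in> x \<and> v \<in> y \<and> A u v} {(u, v). u \<in> x \<and> v \<in> y \<and> B u v}"
    unfolding symdiff_def by auto
  then show ?thesis unfolding bform_def
    by (simp add: odd_card_symdiff pset_finite assms)
qed

lemma bform_restrict:
  assumes "x \<subseteq> S" "y \<subseteq> S"
  shows "bform (\<lambda>u w. u \<in> S \<and> w \<in> S \<and> C u w) x y = bform C x y"
proof -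
  have "{(u, v). u \<in> x \<and> v \<in> y \<and> (u \<in> S \<and> v \<in> S \<and> C u v)} = {(u, v). u \<in> x \<and> v \<in> y \<and> C u v}"
    using assms by auto
  then show ?thesis unfolding bform_def by simp
qed

lemma bform_rank1:
  assumes "finite x" "finite y"
  shows "bform (\<lambda>u w. P u \<and> Q w) x y = (odd (card {u \<in> x. P u}) \<and> odd (card {w \<in> y. Q w}))"
proof -
  have "{(u, v). u \<in> x \<and> v \<in> y \<and> (P u \<and> Q v)} = {u \<in> x. P u} \<times> {w \<in> y. Q w}" by auto
  then show ?thesis unfolding bform_def by (simp add: card_cartesian_product)
qed


lemma graphD:
  assumes "is_graph G"
  shows "finite (fst G)" "\<And>u w. snd G u w = snd G w u" "\<And>u w. snd G u w \<Longrightarrow> u \<in> fst G"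
    "\<And>u w. snd G u w \<Longrightarrow> w \<in> fst G"
  using assms unfolding is_graph_def by auto

lemma gamma_lemma:
  assumes g: "is_graph G" and WV: "W \<subseteq> fst G" and red: "reducible G W"
    and u: "u \<in> fst G - W" and w: "w \<in> fst G - W"
    and x': "x' \<in> perpE G W" and xu: "symdiff x' {u} \<subseteq> W"
  shows "bformW G W {u} {w} = bform (snd G) x' {w}"
proof -
  let ?A = "snd G"
  have fin: "finite (fst G)" using graphD[OF g] by simp
  have sym: "\<And>a b. ?A a b = ?A b a" using graphD[OF g] by simp
  have finS: "\<And>s. s \<subseteq> fst G \<Longrightarrow> finite s" using fin finite_subset by blast
  define p where "p = perp_part G W {u}"
  define q where "q = perp_part G W {w}"
  have "\<exists>x''. x'' \<in> perpE G W \<and> symdiff {u} x'' \<in> span_W W"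
    using x' xu by (intro exI[of _ x']) (auto simp: span_W_def symdiff_def)
  then have p: "p \<in> perpE G W \<and> symdiff {u} p \<in> span_W W"
    unfolding p_def perp_part_def by (rule someI_ex)
  obtain y z where yz: "y \<in> span_W W" "z \<in> perpE G W" "{w} = symdiff y z"
    using red w unfolding reducible_def by blast
  have "\<exists>x''. x'' \<in> perpE G W \<and> symdiff {w} x'' \<in> span_W W"
    using yz by (intro exI[of _ z]) (auto simp: span_W_def symdiff_def)
  then have q: "q \<in> perpE G W \<and> symdiff {w} q \<in> span_W W"
    unfolding q_def perp_part_def by (rule someI_ex)
  have pV: "p \<subseteq> fst G" and qV: "q \<subseteq> fst G" and xV: "x' \<subseteq> fst G"
    using p q x' by (auto simp: perpE_def)
  have d1: "symdiff p x' \<in> span_W W"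
    using p xu unfolding span_W_def symdiff_def by auto
  have "bform ?A p q = (bform ?A x' q \<noteq> bform ?A (symdiff p x') q)"
  proof -
    have "p = symdiff x' (symdiff p x')" unfolding symdiff_def by auto
    then have "bform ?A p q = bform ?A (symdiff x' (symdiff p x')) q" by simp
    also have "\<dots> = (bform ?A x' q \<noteq> bform ?A (symdiff p x') q)"
      by (rule bform_symdiff_left) (use pV qV xV finS in \<open>auto simp: symdiff_def\<close>)
    finally show ?thesis .
  qed
  moreover have "bform ?A (symdiff p x') q = False"
    using bform_sym[of ?A, OF sym] q d1 unfolding perpE_def by auto
  moreover have "bform ?A x' q = bform ?A x' {w}"
  proof -
    have "q = symdiff {w} (symdiff {w} q)" unfolding symdiff_def by auto
    then have "bform ?A x' q = bform ?A x' (symdiff {w} (symdiff {w} q))" by simp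
    also have "\<dots> = (bform ?A x' {w} \<noteq> bform ?A x' (symdiff {w} q))"
      by (rule bform_symdiff_right) (use qV xV finS w in \<open>auto simp: symdiff_def\<close>)
    finally show ?thesis using x' q unfolding perpE_def by auto
  qed
  ultimately show ?thesis unfolding bformW_def p_def q_def by simp
qed

lemma step_lemma:
  assumes g: "is_graph G" and WV: "W \<subseteq> fst G" and red: "reducible G W"
    and D: "D \<subseteq> W" and g': "is_graph G'" and V': "fst G' = fst G - D"
    and H: "\<And>x y. x \<in> perpE G W \<Longrightarrow> y \<subseteq> fst G - D \<Longrightarrow> bform (snd G') (x - D) y = bform (snd G) x y"
  shows "reducible G' (W - D)" "Gamma (W - D) G' = Gamma W G"
proof -
  have lift: "z - D \<in> perpE G' (W - D)" if z: "z \<in> perpE G W" for z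
  proof -
    have "z - D \<subseteq> fst G'" using z V' unfolding perpE_def by auto
    moreover have "\<not> bform (snd G') (z - D) w" if "w \<in> span_W (W - D)" for w
    proof -
      have "w \<subseteq> fst G - D" using that WV unfolding span_W_def by auto
      then have "bform (snd G') (z - D) w = bform (snd G) z w" using H z by blast
      moreover have "w \<in> span_W W" using that unfolding span_W_def by auto
      ultimately show ?thesis using z unfolding perpE_def by auto
    qed
    ultimately show ?thesis unfolding perpE_def by auto
  qed
  show red': "reducible G' (W - D)"
    unfolding reducible_def
  proof (intro allI impI)
    fix x assume x: "x \<subseteq> fst G'"
    then have "x \<subseteq> fst G" using V' by auto
    then obtain y z where yz: "y \<in> span_W W" "z \<in> perpE G W" "x = symdiff y z"
      using red unfolding reducible_def by blast
    have "symdiff x (z - D) \<in> span_W (W - D)"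
      using yz x V' unfolding span_W_def symdiff_def by auto
    moreover have "x = symdiff (symdiff x (z - D)) (z - D)" unfolding symdiff_def by auto
    ultimately show "\<exists>y z. y \<in> span_W (W - D) \<and> z \<in> perpE G' (W - D) \<and> x = symdiff y z"
      using lift[OF yz(2)] by blast
  qed
  have WV': "W - D \<subseteq> fst G'" using WV V' by auto
  have VW: "fst G' - (W - D) = fst G - W" using V' D by auto
  have "\<forall>u w. (u \<in> fst G' - (W - D) \<and> w \<in> fst G' - (W - D) \<and> bformW G' (W - D) {u} {w})
     = (u \<in> fst G - W \<and> w \<in> fst G - W \<and> bformW G W {u} {w})"
  proof (intro allI)
    fix u w
    show "(u \<in> fst G' - (W - D) \<and> w \<in> fst G' - (W - D) \<and> bformW G' (W - D) {u} {w})
     = (u \<in> fst G - W \<and> w \<in> fst G - W \<and> bformW G W {u} {w})"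
    proof (cases "u \<in> fst G - W \<and> w \<in> fst G - W")
      case True
      then have "{u} \<subseteq> fst G" by auto
      then obtain y z where yz: "y \<in> span_W W" "z \<in> perpE G W" "{u} = symdiff y z"
        using red unfolding reducible_def by blast
      have zu: "symdiff z {u} \<subseteq> W" using yz unfolding span_W_def symdiff_def by auto
      have e1: "bformW G W {u} {w} = bform (snd G) z {w}"
        using gamma_lemma[OF g WV red _ _ yz(2) zu] True by blast
      have zu': "symdiff (z - D) {u} \<subseteq> W - D" using zu True D unfolding symdiff_def by auto
      have e2: "bformW G' (W - D) {u} {w} = bform (snd G') (z - D) {w}"
        using gamma_lemma[OF g' WV' red' _ _ lift[OF yz(2)] zu'] True VW by blast
      have "bform (snd G') (z - D) {w} = bform (snd G) z {w}"
        using H[OF yz(2)] True D by auto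
      then show ?thesis using e1 e2 VW True by simp
    next
      case False then show ?thesis using VW by auto
    qed
  qed
  then show "Gamma (W - D) G' = Gamma W G"
    unfolding Gamma_def using VW by auto
qed


lemma perp_single:
  assumes "x \<in> perpE G W" "v \<in> W"
  shows "\<not> bform (snd G) x {v}"
  using assms unfolding perpE_def span_W_def by auto

lemma card_row:
  assumes "\<And>a b. A a b = A b a"
  shows "odd (card {u \<in> x. A v u}) = bform A x {v}"
  unfolding bform_single_right using assms by simp

lemma H_gpr:
  assumes g: "is_graph G" and WV: "W \<subseteq> fst G" and v: "v \<in> W" and loop: "snd G v v"
    and x: "x \<in> perpE G W" and y: "y \<subseteq> fst G - {v}"
  shows "bform (snd (apply_rule (Gpr v) G)) (x - {v}) y = bform (snd G) x y"
proof -
  let ?A = "snd G"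
  have fin: "finite (fst G)" and sym: "\<And>a b. ?A a b = ?A b a" using graphD[OF g] by auto
  have xV: "x \<subseteq> fst G" using x unfolding perpE_def by auto
  have fx: "finite x" "finite (x - {v})" "finite y" using xV y fin by (auto intro: finite_subset[OF _ fin])
  have "snd (apply_rule (Gpr v) G) = (\<lambda>u w. u \<in> fst G - {v} \<and> w \<in> fst G - {v} \<and>
       (\<lambda>u w. ?A u w \<noteq> (\<lambda>u w. ?A v u \<and> ?A v w) u w) u w)" (is "_ = ?L") by simp
  then have "bform (snd (apply_rule (Gpr v) G)) (x - {v}) y =
      bform (\<lambda>u w. ?A u w \<noteq> (\<lambda>u w. ?A v u \<and> ?A v w) u w) (x - {v}) y"
    by (simp only:) (rule bform_restrict, use xV y in auto)
  also have "\<dots> = (bform ?A (x - {v}) y \<noteq> bform (\<lambda>u w. ?A v u \<and> ?A v w) (x - {v}) y)"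
    by (rule bform_add) (use fx in auto)
  also have "bform (\<lambda>u w. ?A v u \<and> ?A v w) (x - {v}) y = (bform ?A (x - {v}) {v} \<and> bform ?A {v} y)"
    unfolding bform_rank1[OF fx(2,3)] card_row[of ?A "x - {v}" v, OF sym] bform_single_left[of ?A v y, symmetric] ..
  finally have e1: "bform (snd (apply_rule (Gpr v) G)) (x - {v}) y =
     (bform ?A (x - {v}) y \<noteq> (bform ?A (x - {v}) {v} \<and> bform ?A {v} y))" .
  have e2: "bform ?A x y = (bform ?A (x - {v}) y \<noteq> (v \<in> x \<and> bform ?A {v} y))"
    by (rule bform_remove[OF fx(1) fx(3)])
  have e3: "bform ?A x {v} = (bform ?A (x - {v}) {v} \<noteq> (v \<in> x \<and> bform ?A {v} {v}))"
    by (rule bform_remove[OF fx(1)]) simp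
  have "\<not> bform ?A x {v}" using perp_single[OF x v] .
  then have "bform ?A (x - {v}) {v} = (v \<in> x)" using e3 loop unfolding bform_single by simp
  then show ?thesis using e1 e2 by auto
qed

lemma H_gdr:
  assumes g: "is_graph G" and WV: "W \<subseteq> fst G" and v1: "v1 \<in> W" and v2: "v2 \<in> W"
    and app: "applies (Gdr v1 v2) G"
    and x: "x \<in> perpE G W" and y: "y \<subseteq> fst G - {v1, v2}"
  shows "bform (snd (apply_rule (Gdr v1 v2) G)) (x - {v1, v2}) y = bform (snd G) x y"
proof -
  let ?A = "snd G"
  have fin: "finite (fst G)" and sym: "\<And>a b. ?A a b = ?A b a" using graphD[OF g] by auto
  have l1: "\<not> ?A v1 v1" and l2: "\<not> ?A v2 v2" and e12: "?A v1 v2" using app by auto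
  then have ne: "v1 \<noteq> v2" by auto
  have e21: "?A v2 v1" using e12 sym by metis
  have xV: "x \<subseteq> fst G" using x unfolding perpE_def by auto
  let ?a1 = "x - {v1}" let ?a = "x - {v1, v2}"
  have aa: "?a = ?a1 - {v2}" by auto
  have fx: "finite x" "finite ?a1" "finite ?a" "finite y" using xV y fin by (auto intro: finite_subset[OF _ fin])
  let ?R = "\<lambda>u w. ((?A v1 u \<and> ?A v2 w) \<noteq> (?A v2 u \<and> ?A v1 w))"
  have "snd (apply_rule (Gdr v1 v2) G) = (\<lambda>u w. u \<in> fst G - {v1, v2} \<and> w \<in> fst G - {v1, v2} \<and>
       (\<lambda>u w. ?A u w \<noteq> ?R u w) u w)" by simp
  then have "bform (snd (apply_rule (Gdr v1 v2) G)) ?a y = bform (\<lambda>u w. ?A u w \<noteq> ?R u w) ?a y"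
    by (simp only:) (rule bform_restrict, use xV y in auto)
  also have "\<dots> = (bform ?A ?a y \<noteq> bform ?R ?a y)"
    by (rule bform_add) (use fx in auto)
  also have "bform ?R ?a y = (bform (\<lambda>u w. ?A v1 u \<and> ?A v2 w) ?a y \<noteq> bform (\<lambda>u w. ?A v2 u \<and> ?A v1 w) ?a y)"
    using bform_add[OF fx(3,4), of "\<lambda>u w. ?A v1 u \<and> ?A v2 w" "\<lambda>u w. ?A v2 u \<and> ?A v1 w"] by simp
  also have "bform (\<lambda>u w. ?A v1 u \<and> ?A v2 w) ?a y = (bform ?A ?a {v1} \<and> bform ?A {v2} y)"
    unfolding bform_rank1[OF fx(3,4)] card_row[of ?A ?a v1, OF sym] bform_single_left[of ?A v2 y, symmetric] ..
  also have "bform (\<lambda>u w. ?A v2 u \<and> ?A v1 w) ?a y = (bform ?A ?a {v2} \<and> bform ?A {v1} y)"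
    unfolding bform_rank1[OF fx(3,4)] card_row[of ?A ?a v2, OF sym] bform_single_left[of ?A v1 y, symmetric] ..
  finally have e1: "bform (snd (apply_rule (Gdr v1 v2) G)) ?a y =
     (bform ?A ?a y \<noteq> ((bform ?A ?a {v1} \<and> bform ?A {v2} y) \<noteq> (bform ?A ?a {v2} \<and> bform ?A {v1} y)))" .
  have rm: "\<And>z. finite z \<Longrightarrow> bform ?A x z = ((bform ?A ?a z \<noteq> (v2 \<in> x \<and> bform ?A {v2} z)) \<noteq> (v1 \<in> x \<and> bform ?A {v1} z))"
  proof -
    fix z :: "'a set" assume fz: "finite z"
    have "bform ?A x z = (bform ?A ?a1 z \<noteq> (v1 \<in> x \<and> bform ?A {v1} z))"
      by (rule bform_remove[OF fx(1) fz])
    moreover have "bform ?A ?a1 z = (bform ?A ?a z \<noteq> (v2 \<in> ?a1 \<and> bform ?A {v2} z))"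
      unfolding aa by (rule bform_remove[OF fx(2) fz])
    ultimately show "bform ?A x z = ((bform ?A ?a z \<noteq> (v2 \<in> x \<and> bform ?A {v2} z)) \<noteq> (v1 \<in> x \<and> bform ?A {v1} z))"
      using ne by auto
  qed
  have p1: "\<not> bform ?A x {v1}" using perp_single[OF x v1] .
  have p2: "\<not> bform ?A x {v2}" using perp_single[OF x v2] .
  have "bform ?A ?a {v1} = (v2 \<in> x)" using rm[of "{v1}"] p1 l1 e21 unfolding bform_single by auto
  moreover have "bform ?A ?a {v2} = (v1 \<in> x)" using rm[of "{v2}"] p2 l2 e12 unfolding bform_single by auto
  ultimately show ?thesis using e1 rm[OF fx(4)] by auto
qed

lemma H_gnr:
  assumes g: "is_graph G" and app: "applies (Gnr v) G"
    and x: "x \<subseteq> fst G" and y: "y \<subseteq> fst G - {v}"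
  shows "bform (snd (apply_rule (Gnr v) G)) (x - {v}) y = bform (snd G) x y"
proof -
  let ?A = "snd G"
  have fin: "finite (fst G)" using graphD[OF g] by auto
  have fx: "finite x" "finite y" using x y fin by (auto intro: finite_subset[OF _ fin])
  have "snd (apply_rule (Gnr v) G) = (\<lambda>u w. u \<in> fst G - {v} \<and> w \<in> fst G - {v} \<and> ?A u w)" by simp
  then have e1: "bform (snd (apply_rule (Gnr v) G)) (x - {v}) y = bform ?A (x - {v}) y"
    using bform_restrict[of "x - {v}" "fst G - {v}" y] x y by auto
  have e0: "{w \<in> y. ?A v w} = {}" using app y by auto
  have "\<not> bform ?A {v} y" unfolding bform_single_left e0 by simp
  then show ?thesis using e1 bform_remove[OF fx(1) fx(2), of ?A v] by simp
qed


lemma graph_apply: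
  assumes "is_graph G" shows "is_graph (apply_rule r G)"
proof -
  have s: "\<And>u w. snd G u w = snd G w u" and f: "finite (fst G)" using graphD[OF assms] by auto
  show ?thesis
  proof (cases r)
    case (Gpr v) then show ?thesis using s f unfolding is_graph_def by auto
  next
    case (Gdr v1 v2) then show ?thesis using s f unfolding is_graph_def by auto
  next
    case (Gnr v) then show ?thesis using s f unfolding is_graph_def by auto
  qed
qed

lemma fst_apply: "fst (apply_rule r G) = fst G - rule_dom r"
  by (cases r) auto

lemma choose_rule:
  assumes g: "is_graph G" and WV: "W \<subseteq> fst G" and red: "reducible G W" and ne: "W \<noteq> {}"
  shows "\<exists>r. applies r G \<and> rule_dom r \<subseteq> W \<and> rule_dom r \<noteq> {} \<and>
    (\<forall>x y. x \<in> perpE G W \<longrightarrow> y \<subseteq> fst G - rule_dom r \<longrightarrow>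
        bform (snd (apply_rule r G)) (x - rule_dom r) y = bform (snd G) x y)"
proof -
  let ?A = "snd G"
  have fin: "finite (fst G)" and sym: "\<And>a b. ?A a b = ?A b a"
    and supp: "\<And>a b. ?A a b \<Longrightarrow> a \<in> fst G" using graphD[OF g] by auto
  show ?thesis
  proof (cases "\<exists>v\<in>W. ?A v v")
    case True
    then obtain v where v: "v \<in> W" "?A v v" by blast
    show ?thesis
      by (rule exI[of _ "Gpr v"]) (use v WV H_gpr[OF g WV v] in auto)
  next
    case nl: False
    show ?thesis
    proof (cases "\<exists>v1\<in>W. \<exists>v2\<in>W. ?A v1 v2")
      case True
      then obtain v1 v2 where v: "v1 \<in> W" "v2 \<in> W" "?A v1 v2" by blast
      have app: "applies (Gdr v1 v2) G" using v nl WV by auto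
      show ?thesis
        by (rule exI[of _ "Gdr v1 v2"]) (use v app H_gdr[OF g WV v(1,2) app] in auto)
    next
      case False
      obtain v where v: "v \<in> W" using ne by blast
      have noadj: "\<not> ?A u v" if u: "u \<in> fst G" for u
      proof -
        obtain y z where yz: "y \<in> span_W W" "z \<in> perpE G W" "{u} = symdiff y z"
          using red u unfolding reducible_def by (meson empty_subsetI insert_subset)
        have fy: "finite y" "finite z" using yz WV fin unfolding span_W_def perpE_def
          by (auto intro: finite_subset[OF _ fin])
        have "bform ?A {u} {v} = (bform ?A y {v} \<noteq> bform ?A z {v})"
          unfolding yz(3) by (rule bform_symdiff_left) (use fy in auto)
        moreover have "\<not> bform ?A z {v}" using perp_single[OF yz(2) v] .
        moreover have e0: "{w \<in> y. ?A w v} = {}" using yz(1) False v unfolding span_W_def by auto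
        have "\<not> bform ?A y {v}" unfolding bform_single_right e0 by simp
        ultimately show ?thesis unfolding bform_single by simp
      qed
      have app: "applies (Gnr v) G" using v nl WV noadj sym by auto
      show ?thesis
        by (rule exI[of _ "Gnr v"])
          (use v app H_gnr[OF g app] in \<open>auto simp: perpE_def\<close>)
    qed
  qed
qed

lemma main_aux:
  "finite W \<Longrightarrow> is_graph G \<Longrightarrow> W \<subseteq> fst G \<Longrightarrow> reducible G W \<Longrightarrow>
   \<exists>rs. applicable rs G \<and> strategy_dom rs = W \<and> run_strategy rs G = Gamma W G"
proof (induction "card W" arbitrary: G W rule: less_induct)
  case less
  note g = less.prems(2) and WV = less.prems(3) and red = less.prems(4)
  show ?case
  proof (cases "W = {}")
    case True
    have "snd G = (\<lambda>u w. u \<in> fst G - W \<and> w \<in> fst G - W \<and> bformW G W {u} {w})"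
    proof (intro ext)
      fix u w
      show "snd G u w = (u \<in> fst G - W \<and> w \<in> fst G - W \<and> bformW G W {u} {w})"
      proof (cases "u \<in> fst G \<and> w \<in> fst G")
        case uw: True
        have uP: "{u} \<in> perpE G W" using True uw unfolding perpE_def span_W_def
          by (auto simp: bform_empty_right)
        have "bformW G W {u} {w} = bform (snd G) {u} {w}"
          by (intro gamma_lemma[OF g WV red _ _ uP]) (use True uw in \<open>auto simp: symdiff_def\<close>)
        then show ?thesis using True uw by (simp add: bform_single)
      next
        case False then show ?thesis using graphD[OF g] by auto
      qed
    qed
    then have "Gamma W G = G" unfolding Gamma_def using True by (simp add: prod_eq_iff)
    then show ?thesis using True by (intro exI[of _ "[]"]) (simp add: strategy_dom_def)
  next
    case False
    then obtain r where r: "applies r G" "rule_dom r \<subseteq> W" "rule_dom r \<noteq> {}"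
      and H: "\<And>x y. x \<in> perpE G W \<Longrightarrow> y \<subseteq> fst G - rule_dom r \<Longrightarrow>
        bform (snd (apply_rule r G)) (x - rule_dom r) y = bform (snd G) x y"
      using choose_rule[OF g WV red] by blast
    let ?G' = "apply_rule r G" let ?D = "rule_dom r"
    have g': "is_graph ?G'" by (rule graph_apply[OF g])
    note st = step_lemma[OF g WV red r(2) g' fst_apply H]
    have lt: "card (W - ?D) < card W"
    proof -
      have fD: "finite ?D" using r(2) less.prems(1) finite_subset by blast
      have "card ?D > 0" using fD r(3) by (simp add: card_gt_0_iff)
      moreover have "card ?D \<le> card W" using r(2) less.prems(1) by (rule card_mono[rotated])
      ultimately show ?thesis using card_Diff_subset[OF fD r(2)] by simp
    qed
    have WV': "W - ?D \<subseteq> fst ?G'" using WV by (simp add: fst_apply) blast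
    obtain rs where rs: "applicable rs ?G'" "strategy_dom rs = W - ?D"
      "run_strategy rs ?G' = Gamma (W - ?D) ?G'"
      using less.hyps[OF lt _ g' WV' st(1)] less.prems(1) by blast
    have "strategy_dom (r # rs) = W" using rs(2) r(2) unfolding strategy_dom_def by auto
    then show ?thesis using rs r(1) st(2) by (intro exI[of _ "r # rs"]) simp
  qed
qed

theorem mainTheorem10:
  fixes G :: "'a graph" and W :: "'a set"
  assumes "is_graph G" and "W \<subseteq> fst G" and "reducible G W"
  shows "\<exists>rs. applicable rs G \<and> strategy_dom rs = W \<and> run_strategy rs G = Gamma W G"
proof -
  have "finite W" using assms(1,2) graphD(1) finite_subset by blast
  then show ?thesis using main_aux assms by blast
qed

end
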